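(* Let $I=\langle N,M,V\rangle$ be an ordered instance of chores with $n$ agents and $m=n+c$ chores for some integer $c>0$, and let $c'=c-1$. Assume there exists an integer $n_{c'}>0$ such that every instance of chores with $n'\ge n_{c'}$ agents and $m'=n'+c'$ chores has an MMS allocation, and that $n>n_{c'}$. If some agent $i\in N$ has an MMS partition in which at least $n-2$ bundles have size less than two and at least $n-1$ bundles have size less than three, then $I$ has an MMS allocation.
   Context: An instance of chores $I=\langle N,M,V\rangle$ has agents $N=\{1,\dots,n\}$, chores $M=\{1,\dots,m\}$ and additive valuations $v_i$ with $v_i(\emptyset)=0$, $v_i(S)=\sum_{g\in S}v_i(\{g\})$ and $v_{ij}:=v_i(\{j\})\le 0$. It is ordered if $v_{ij}\le v_{i(j+1)}$ for all $i$ and $1\le j<m$. An allocation ($n$-partition) is an ordered $n$-tuple of pairwise disjoint, possibly empty subsets of $M$ with union $M$. The maximin share of $i$ is $\mu_i=\max_A\min_j v_i(A_j)$ over all allocations; an MMS partition of $i$ is an allocation $A$ with $v_i(A_j)\ge\mu_i$ for all $j$; an MMS allocation is an allocation with $v_i(A_i)\ge\mu_i$ for all $i$. The size of a bundle is its cardinality. *)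

theory Defs
  imports Complex_Main
begin

(* An instance with n agents {1..n} and m chores {1..m}; v i j is the value of chore j
   for agent i (additive valuations are determined by the single-item values). *)

definition val :: "(nat \<Rightarrow> nat \<Rightarrow> real) \<Rightarrow> nat \<Rightarrow> nat set \<Rightarrow> real" where
  "val v i S = (\<Sum>g\<in>S. v i g)"

definition chores_inst :: "nat \<Rightarrow> nat \<Rightarrow> (nat \<Rightarrow> nat \<Rightarrow> real) \<Rightarrow> bool" where
  "chores_inst n m v \<longleftrightarrow> (\<forall>i\<in>{1..n}. \<forall>j\<in>{1..m}. v i j \<le> 0)"

definition ordered_inst :: "nat \<Rightarrow> nat \<Rightarrow> (nat \<Rightarrow> nat \<Rightarrow> real) \<Rightarrow> bool" where
  "ordered_inst n m v \<longleftrightarrow> (\<forall>i\<in>{1..n}. \<forall>j. 1 \<le> j \<and> j < m \<longrightarrow> v i j \<le> v i (j + 1))"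

definition is_alloc :: "nat \<Rightarrow> nat \<Rightarrow> (nat \<Rightarrow> nat set) \<Rightarrow> bool" where
  "is_alloc n m A \<longleftrightarrow>
     (\<forall>i\<in>{1..n}. A i \<subseteq> {1..m}) \<and>
     (\<forall>i\<in>{1..n}. \<forall>j\<in>{1..n}. i \<noteq> j \<longrightarrow> A i \<inter> A j = {}) \<and>
     (\<Union>i\<in>{1..n}. A i) = {1..m}"

definition min_val :: "nat \<Rightarrow> (nat \<Rightarrow> nat \<Rightarrow> real) \<Rightarrow> nat \<Rightarrow> (nat \<Rightarrow> nat set) \<Rightarrow> real" where
  "min_val n v i A = Min ((\<lambda>j. val v i (A j)) ` {1..n})"

definition mms :: "nat \<Rightarrow> nat \<Rightarrow> (nat \<Rightarrow> nat \<Rightarrow> real) \<Rightarrow> nat \<Rightarrow> real" where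
  "mms n m v i = Max {min_val n v i A | A. is_alloc n m A}"

definition mms_partition :: "nat \<Rightarrow> nat \<Rightarrow> (nat \<Rightarrow> nat \<Rightarrow> real) \<Rightarrow> nat \<Rightarrow> (nat \<Rightarrow> nat set) \<Rightarrow> bool" where
  "mms_partition n m v i A \<longleftrightarrow> is_alloc n m A \<and> (\<forall>j\<in>{1..n}. val v i (A j) \<ge> mms n m v i)"

definition mms_alloc :: "nat \<Rightarrow> nat \<Rightarrow> (nat \<Rightarrow> nat \<Rightarrow> real) \<Rightarrow> (nat \<Rightarrow> nat set) \<Rightarrow> bool" where
  "mms_alloc n m v A \<longleftrightarrow> is_alloc n m A \<and> (\<forall>i\<in>{1..n}. val v i (A i) \<ge> mms n m v i)"

end

theory Submission imports Defs begin

definition part :: "nat set \<Rightarrow> nat set \<Rightarrow> (nat \<Rightarrow> nat set) \<Rightarrow> bool" where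
  "part N0 Y A \<longleftrightarrow> (\<forall>a\<in>N0. A a \<subseteq> Y) \<and> (\<forall>a\<in>N0. \<forall>b\<in>N0. a \<noteq> b \<longrightarrow> A a \<inter> A b = {}) \<and> (\<Union>a\<in>N0. A a) = Y"

lemma is_alloc_part: "is_alloc n m A \<longleftrightarrow> part {1..n} {1..m} A"
  by (simp add: is_alloc_def part_def)

lemma part_insert:
  assumes "part N0 Y A" "i \<notin> N0" "X \<inter> Y = {}"
  shows "part (insert i N0) (X \<union> Y) (A(i := X))"
proof -
  have "(\<Union>a\<in>N0. (A(i:=X)) a) = Y" using assms(1,2) unfolding part_def
    by (metis (no_types, lifting) SUP_cong fun_upd_other)
  then show ?thesis using assms unfolding part_def by auto
qed

lemma part_singles:
  assumes "finite Y" "finite N0" "card Y \<le> card N0"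
  shows "\<exists>A. part N0 Y A \<and> (\<forall>a\<in>N0. card (A a) \<le> 1 \<and> A a \<subseteq> Y)"
proof -
  obtain f where f: "f ` Y \<subseteq> N0" "inj_on f Y" using card_le_inj[OF assms] by blast
  define A where "A a = {y\<in>Y. f y = a}" for a
  have "part N0 Y A" using f unfolding part_def A_def by auto
  moreover have "card (A a) \<le> 1" for a
  proof -
    have "finite (A a)" using assms(1) unfolding A_def by auto
    moreover have "\<forall>a1\<in>A a. \<forall>a2\<in>A a. a1 = a2" using f(2) unfolding A_def inj_on_def by auto
    ultimately show ?thesis using card_le_Suc0_iff_eq by auto
  qed
  ultimately show ?thesis unfolding A_def by auto
qed

lemma part_relabel:
  assumes "bij_betw \<sigma> {1..n'} N0" "bij_betw \<tau> {1..m'} Y" "is_alloc n' m' A'"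
  shows "part N0 Y (\<lambda>a. \<tau> ` A' (inv_into {1..n'} \<sigma> a))"
proof -
  have al: "\<forall>p\<in>{1..n'}. A' p \<subseteq> {1..m'}" "\<forall>p\<in>{1..n'}. \<forall>q\<in>{1..n'}. p \<noteq> q \<longrightarrow> A' p \<inter> A' q = {}"
    "(\<Union>p\<in>{1..n'}. A' p) = {1..m'}" using assms(3) unfolding is_alloc_def by auto
  have inv: "\<And>a. a \<in> N0 \<Longrightarrow> inv_into {1..n'} \<sigma> a \<in> {1..n'} \<and> \<sigma> (inv_into {1..n'} \<sigma> a) = a"
    proof -
    fix a assume a: "a \<in> N0"
    have im: "\<sigma> ` {1..n'} = N0" using assms(1) by (simp add: bij_betw_def)
    show "inv_into {1..n'} \<sigma> a \<in> {1..n'} \<and> \<sigma> (inv_into {1..n'} \<sigma> a) = a"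
      using a im by (metis inv_into_into f_inv_into_f)
  qed
  have invs: "\<And>p. p \<in> {1..n'} \<Longrightarrow> inv_into {1..n'} \<sigma> (\<sigma> p) = p"
    using assms(1) by (simp add: bij_betw_def)
  have s1: "\<forall>a\<in>N0. \<tau> ` A' (inv_into {1..n'} \<sigma> a) \<subseteq> Y"
  proof
    fix a assume "a \<in> N0"
    then have "A' (inv_into {1..n'} \<sigma> a) \<subseteq> {1..m'}" using inv al(1) by blast
    moreover have "\<tau> ` {1..m'} = Y" using assms(2) by (simp add: bij_betw_def)
    ultimately show "\<tau> ` A' (inv_into {1..n'} \<sigma> a) \<subseteq> Y" by blast
  qed
  have s2: "\<forall>a\<in>N0. \<forall>b\<in>N0. a \<noteq> b \<longrightarrow> \<tau> ` A' (inv_into {1..n'} \<sigma> a) \<inter> \<tau> ` A' (inv_into {1..n'} \<sigma> b) = {}"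
  proof (intro ballI impI)
    fix a b assume ab: "a \<in> N0" "b \<in> N0" "a \<noteq> b"
    let ?p = "inv_into {1..n'} \<sigma> a" and ?q = "inv_into {1..n'} \<sigma> b"
    have "?p \<noteq> ?q" using inv[OF ab(1)] inv[OF ab(2)] ab(3) by force
    then have d: "A' ?p \<inter> A' ?q = {}" using al(2) inv ab by blast
    have "A' ?p \<union> A' ?q \<subseteq> {1..m'}" using al(1) inv ab by blast
    moreover have "inj_on \<tau> {1..m'}" using assms(2) by (simp add: bij_betw_def)
    ultimately have "inj_on \<tau> (A' ?p \<union> A' ?q)" using inj_on_subset by blast
    then show "\<tau> ` A' ?p \<inter> \<tau> ` A' ?q = {}" using d inj_on_image_Int[of \<tau> "A' ?p \<union> A' ?q" "A' ?p" "A' ?q"] by auto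
  qed
  have s3: "(\<Union>a\<in>N0. \<tau> ` A' (inv_into {1..n'} \<sigma> a)) = Y"
  proof
    show "(\<Union>a\<in>N0. \<tau> ` A' (inv_into {1..n'} \<sigma> a)) \<subseteq> Y" using s1 by blast
  next
    show "Y \<subseteq> (\<Union>a\<in>N0. \<tau> ` A' (inv_into {1..n'} \<sigma> a))"
    proof
      fix y assume "y \<in> Y"
      then obtain j where j: "j \<in> {1..m'}" "y = \<tau> j" using assms(2) unfolding bij_betw_def by blast
      then obtain p where p: "p \<in> {1..n'}" "j \<in> A' p" using al(3) by blast
      have "\<sigma> p \<in> N0" using p assms(1) unfolding bij_betw_def by blast
      moreover have "y \<in> \<tau> ` A' (inv_into {1..n'} \<sigma> (\<sigma> p))" using invs p j by simp
      ultimately show "y \<in> (\<Union>a\<in>N0. \<tau> ` A' (inv_into {1..n'} \<sigma> a))" by blast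
    qed
  qed
  show ?thesis using s1 s2 s3 unfolding part_def by blast
qed


lemma val_anti:
  assumes "finite S" "S' \<subseteq> S" "\<forall>g\<in>S. v a g \<le> 0"
  shows "val v a S \<le> val v a S'"
proof -
  have "val v a S = val v a (S - S') + val v a S'"
    unfolding val_def by (rule sum.subset_diff[OF assms(2,1)])
  moreover have "val v a (S - S') \<le> 0" unfolding val_def using assms(3) by (intro sum_nonpos) auto
  ultimately show ?thesis by simp
qed

lemma vals_fin:
  assumes "1 \<le> n"
  shows "finite {min_val n v a A |A. is_alloc n m A}"
proof (rule finite_subset)
  show "{min_val n v a A |A. is_alloc n m A} \<subseteq> (val v a) ` Pow {1..m}"
  proof
    fix x assume "x \<in> {min_val n v a A |A. is_alloc n m A}"
    then obtain A where A: "is_alloc n m A" "x = min_val n v a A" by blast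
    have "x \<in> (\<lambda>j. val v a (A j)) ` {1..n}" unfolding A(2) min_val_def
      using assms by (intro Min_in) auto
    then obtain j where "j \<in> {1..n}" "x = val v a (A j)" by blast
    moreover have "A j \<subseteq> {1..m}" using A(1) \<open>j \<in> {1..n}\<close> unfolding is_alloc_def by blast
    ultimately show "x \<in> (val v a) ` Pow {1..m}" by blast
  qed
qed auto

lemma alloc_ex: "1 \<le> n \<Longrightarrow> is_alloc n m (\<lambda>j. if j = 1 then {1..m} else {})"
  unfolding is_alloc_def by auto

lemma mms_ge_min: "1 \<le> n \<Longrightarrow> is_alloc n m A \<Longrightarrow> min_val n v a A \<le> mms n m v a"
  unfolding mms_def by (rule Max_ge[OF vals_fin]) blast+

lemma mms_lower:
  assumes "1 \<le> n" "is_alloc n m A" "\<forall>j\<in>{1..n}. t \<le> val v a (A j)"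
  shows "t \<le> mms n m v a"
proof -
  have "t \<le> min_val n v a A" unfolding min_val_def using assms by (subst Min_ge_iff) auto
  then show ?thesis using mms_ge_min[OF assms(1,2), of v a] by linarith
qed

lemma mms_attained:
  assumes "1 \<le> n"
  shows "\<exists>Q. is_alloc n m Q \<and> (\<forall>j\<in>{1..n}. mms n m v a \<le> val v a (Q j))"
proof -
  have ne: "{min_val n v a A |A. is_alloc n m A} \<noteq> {}" using alloc_ex[OF assms] by blast
  have "mms n m v a \<in> {min_val n v a A |A. is_alloc n m A}"
    unfolding mms_def by (rule Max_in[OF vals_fin[OF assms] ne])
  then obtain Q where Q: "is_alloc n m Q" "mms n m v a = min_val n v a Q" by blast
  have "\<forall>j\<in>{1..n}. min_val n v a Q \<le> val v a (Q j)" unfolding min_val_def by auto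
  then show ?thesis using Q by auto
qed

lemma small_ok:
  assumes "chores_inst n m v" "1 \<le> n" "a \<in> {1..n}" "S \<subseteq> {1..m}" "card S \<le> 1"
  shows "mms n m v a \<le> val v a S"
proof -
  obtain Q where Q: "is_alloc n m Q" "\<forall>j\<in>{1..n}. mms n m v a \<le> val v a (Q j)"
    using mms_attained[OF assms(2)] by blast
  have neg: "\<forall>g\<in>{1..m}. v a g \<le> 0" using assms(1,3) unfolding chores_inst_def by blast
  have fin: "finite S" using assms(4) finite_subset by blast
  have "S = {} \<or> (\<exists>j. S = {j})" using assms(5) fin
    by (metis One_nat_def card_1_singletonE card_0_eq le_Suc_eq le_zero_eq)
  then show ?thesis
  proof
    assume "S = {}"
    have "Q 1 \<subseteq> {1..m}" using Q(1) assms(2) unfolding is_alloc_def by auto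
    then have "val v a (Q 1) \<le> 0" unfolding val_def using neg by (intro sum_nonpos) auto
    moreover have "mms n m v a \<le> val v a (Q 1)" using Q(2) assms(2) by auto
    ultimately show ?thesis using \<open>S = {}\<close> by (simp add: val_def)
  next
    assume "\<exists>j. S = {j}"
    then obtain j where j: "S = {j}" by blast
    then have "j \<in> {1..m}" using assms(4) by auto
    then obtain k where k: "k \<in> {1..n}" "j \<in> Q k" using Q(1) unfolding is_alloc_def by blast
    have Qk: "Q k \<subseteq> {1..m}" using Q(1) k(1) unfolding is_alloc_def by blast
    have "val v a (Q k) \<le> val v a {j}"
      by (rule val_anti) (use Qk k neg finite_subset in auto)
    then show ?thesis using Q(2) k j by fastforce
  qed
qed


lemma mms_lower_gen:
  assumes "finite K" "card K = n'" "1 \<le> n'" "bij_betw \<tau> {1..m'} Y"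
    and "\<forall>k\<in>K. R k \<subseteq> Y" "\<forall>k\<in>K. \<forall>l\<in>K. k \<noteq> l \<longrightarrow> R k \<inter> R l = {}"
    and "(\<Union>k\<in>K. R k) = Y" "\<forall>k\<in>K. t \<le> sum w (R k)"
    and "\<forall>j\<in>{1..m'}. v' p j = w (\<tau> j)"
  shows "t \<le> mms n' m' v' p"
proof -
  obtain \<rho> where \<rho>: "bij_betw \<rho> {1..n'} K" using ex_bij_betw_nat_finite_1[OF assms(1)] assms(2) by blast
  have \<rho>i: "\<rho> ` {1..n'} = K" "inj_on \<rho> {1..n'}" using \<rho> by (auto simp: bij_betw_def)
  have \<tau>i: "\<tau> ` {1..m'} = Y" "inj_on \<tau> {1..m'}" using assms(4) by (auto simp: bij_betw_def)
  define A where "A q = {j\<in>{1..m'}. \<tau> j \<in> R (\<rho> q)}" for q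
  have al: "is_alloc n' m' A"
    unfolding is_alloc_def
  proof (intro conjI ballI impI)
    fix q assume "q \<in> {1..n'}" then show "A q \<subseteq> {1..m'}" unfolding A_def by auto
  next
    fix q q' assume q: "q \<in> {1..n'}" "q' \<in> {1..n'}" "q \<noteq> q'"
    then have "\<rho> q \<noteq> \<rho> q'" using \<rho>i(2) inj_on_def by metis
    moreover have "\<rho> q \<in> K" "\<rho> q' \<in> K" using q \<rho>i(1) by auto
    ultimately have "R (\<rho> q) \<inter> R (\<rho> q') = {}" using assms(6) by blast
    then show "A q \<inter> A q' = {}" unfolding A_def by auto
  next
    show "(\<Union>q\<in>{1..n'}. A q) = {1..m'}"
    proof
      show "(\<Union>q\<in>{1..n'}. A q) \<subseteq> {1..m'}" unfolding A_def by auto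
    next
      show "{1..m'} \<subseteq> (\<Union>q\<in>{1..n'}. A q)"
      proof
        fix j assume j: "j \<in> {1..m'}"
        then have "\<tau> j \<in> Y" using \<tau>i(1) by blast
        then obtain k where k: "k \<in> K" "\<tau> j \<in> R k" using assms(7) by blast
        then obtain q where q: "q \<in> {1..n'}" "\<rho> q = k" using \<rho>i(1) by blast
        then have "j \<in> A q" unfolding A_def using j k by auto
        then show "j \<in> (\<Union>q\<in>{1..n'}. A q)" using q by blast
      qed
    qed
  qed
  have "\<forall>q\<in>{1..n'}. t \<le> val v' p (A q)"
  proof
    fix q assume q: "q \<in> {1..n'}"
    have sub: "A q \<subseteq> {1..m'}" unfolding A_def by auto
    have img: "\<tau> ` A q = R (\<rho> q)"
    proof
      show "\<tau> ` A q \<subseteq> R (\<rho> q)" unfolding A_def by auto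
    next
      have "R (\<rho> q) \<subseteq> Y" using assms(5) q \<rho>i(1) by blast
      then show "R (\<rho> q) \<subseteq> \<tau> ` A q" unfolding A_def using \<tau>i(1) by auto
    qed
    have "val v' p (A q) = sum (\<lambda>j. w (\<tau> j)) (A q)"
      unfolding val_def using sub assms(9) by (intro sum.cong) auto
    also have "\<dots> = sum w (\<tau> ` A q)"
      using sum.reindex[of \<tau> "A q" w] inj_on_subset[OF \<tau>i(2) sub] by simp
    also have "\<dots> = sum w (R (\<rho> q))" using img by simp
    finally show "t \<le> val v' p (A q)" using assms(8) q \<rho>i(1) by auto
  qed
  then show ?thesis using mms_lower[OF assms(3) al] by blast
qed

lemma reject_valid:
  assumes ci: "chores_inst n m v" and a: "a \<in> {1..n}" and n2: "2 \<le> n"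
    and xy: "x \<in> {1..m}" "y \<in> {1..m}" "x \<noteq> y"
    and rej: "v a x + v a y < mms n m v a"
    and \<tau>: "bij_betw \<tau> {1..m'} ({1..m} - {x,y})"
    and v': "\<forall>j\<in>{1..m'}. v' p j = v a (\<tau> j)"
  shows "mms n m v a \<le> mms (n-1) m' v' p"
proof -
  let ?mu = "mms n m v a"
  obtain Q where Q: "is_alloc n m Q" "\<forall>j\<in>{1..n}. ?mu \<le> val v a (Q j)"
    using mms_attained[of n] n2 by fastforce
  have Qs: "\<forall>j\<in>{1..n}. Q j \<subseteq> {1..m}" "\<forall>j\<in>{1..n}. \<forall>l\<in>{1..n}. j \<noteq> l \<longrightarrow> Q j \<inter> Q l = {}"
    "(\<Union>j\<in>{1..n}. Q j) = {1..m}" using Q(1) unfolding is_alloc_def by auto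
  have neg: "\<forall>g\<in>{1..m}. v a g \<le> 0" using ci a unfolding chores_inst_def by blast
  obtain k where k: "k \<in> {1..n}" "x \<in> Q k" using xy(1) Qs(3) by blast
  obtain l where l: "l \<in> {1..n}" "y \<in> Q l" using xy(2) Qs(3) by blast
  have fin: "\<And>j. j \<in> {1..n} \<Longrightarrow> finite (Q j)" using Qs(1) finite_subset by blast
  have kl: "k \<noteq> l"
  proof
    assume "k = l"
    then have "{x, y} \<subseteq> Q k" using k l by auto
    then have "val v a (Q k) \<le> val v a {x,y}"
      using val_anti[OF fin[OF k(1)], of "{x,y}" v a] neg Qs(1) k(1) by blast
    also have "\<dots> = v a x + v a y" using xy(3) by (simp add: val_def)
    finally show False using Q(2) k(1) rej by fastforce
  qed
  define K where "K = {1..n} - {l}"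
  define R where "R j = (if j = k then (Q k - {x}) \<union> (Q l - {y}) else Q j)" for j
  have xl: "x \<notin> Q l" using Qs(2) k l kl by blast
  have yk: "y \<notin> Q k" using Qs(2) k l kl by blast
  have xo: "\<And>j. j \<in> {1..n} \<Longrightarrow> j \<noteq> k \<Longrightarrow> x \<notin> Q j" using Qs(2) k by blast
  have yo: "\<And>j. j \<in> {1..n} \<Longrightarrow> j \<noteq> l \<Longrightarrow> y \<notin> Q j" using Qs(2) l by blast
  have "?mu \<le> mms (n-1) m' v' p"
  proof (rule mms_lower_gen[where K=K and R=R and \<tau>=\<tau> and Y="{1..m} - {x,y}" and w="v a"])
    show "finite K" unfolding K_def by auto
    show "card K = n - 1" unfolding K_def using l by auto
    show "1 \<le> n - 1" using n2 by auto
    show "bij_betw \<tau> {1..m'} ({1..m} - {x, y})" by fact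
    show "\<forall>j\<in>{1..m'}. v' p j = v a (\<tau> j)" by fact
    show "\<forall>j\<in>K. R j \<subseteq> {1..m} - {x, y}"
      unfolding K_def R_def using Qs(1) k l xl yk xo yo by auto
    show "\<forall>j\<in>K. \<forall>j'\<in>K. j \<noteq> j' \<longrightarrow> R j \<inter> R j' = {}"
    proof (intro ballI impI)
      fix j j' assume jj: "j \<in> K" "j' \<in> K" "j \<noteq> j'"
      have jn: "j \<in> {1..n}" "j \<noteq> l" "j' \<in> {1..n}" "j' \<noteq> l" using jj unfolding K_def by auto
      have kl1: "Q k \<inter> Q l = {}" using Qs(2) k(1) l(1) kl by blast
      show "R j \<inter> R j' = {}"
      proof (cases "j = k")
        case True
        then have "j' \<noteq> k" using jj by auto
        then have "Q j' \<inter> Q k = {}" "Q j' \<inter> Q l = {}" using Qs(2) jn k(1) l(1) by blast+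
        then show ?thesis unfolding R_def using True \<open>j' \<noteq> k\<close> by auto
      next
        case False
        note jk = False
        show ?thesis
        proof (cases "j' = k")
          case True
          have "Q j \<inter> Q k = {}" "Q j \<inter> Q l = {}" using Qs(2) jn k(1) l(1) jk by blast+
          then show ?thesis unfolding R_def using True jk by auto
        next
          case False
          have "Q j \<inter> Q j' = {}" using Qs(2) jn jj(3) by blast
          then show ?thesis unfolding R_def using False jk by auto
        qed
      qed
    qed
    show "(\<Union>j\<in>K. R j) = {1..m} - {x, y}"
    proof
      show "(\<Union>j\<in>K. R j) \<subseteq> {1..m} - {x, y}"
        unfolding K_def R_def using Qs(1) k l xl yk xo yo by auto
    next
      show "{1..m} - {x, y} \<subseteq> (\<Union>j\<in>K. R j)"
      proof
        fix g assume g: "g \<in> {1..m} - {x, y}"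
        then obtain j where j: "j \<in> {1..n}" "g \<in> Q j" using Qs(3) by blast
        show "g \<in> (\<Union>j\<in>K. R j)"
        proof (cases "j = l \<or> j = k")
          case True
          then have "g \<in> R k" unfolding R_def using g j by auto
          moreover have "k \<in> K" unfolding K_def using k kl by auto
          ultimately show ?thesis by blast
        next
          case False
          then have "g \<in> R j" "j \<in> K" unfolding R_def K_def using j by auto
          then show ?thesis by blast
        qed
      qed
    qed
    show "\<forall>j\<in>K. ?mu \<le> sum (v a) (R j)"
    proof
      fix j assume j: "j \<in> K"
      show "?mu \<le> sum (v a) (R j)"
      proof (cases "j = k")
        case False
        then show ?thesis using Q(2) j unfolding R_def K_def val_def by auto
      next
        case True
        have d: "(Q k - {x}) \<inter> (Q l - {y}) = {}" using Qs(2) k l kl by blast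
        have "sum (v a) (R j) = sum (v a) (Q k - {x}) + sum (v a) (Q l - {y})"
          unfolding R_def using True d fin k l by (simp add: sum.union_disjoint)
        also have "\<dots> = (val v a (Q k) - v a x) + (val v a (Q l) - v a y)"
          unfolding val_def using fin k l by (simp add: sum_diff1)
        moreover have "?mu \<le> val v a (Q k)" "?mu \<le> val v a (Q l)" using Q(2) k(1) l(1) by auto
        ultimately show ?thesis using rej by linarith
      qed
    qed
  qed
  then show ?thesis .
qed


lemma card_UN_small:
  assumes "finite J" "\<forall>j\<in>J. card (P j) \<le> 1"
  shows "card (\<Union>j\<in>J. P j) \<le> card J"
proof -
  have "card (\<Union>j\<in>J. P j) \<le> (\<Sum>j\<in>J. card (P j))" by (rule card_UN_le[OF assms(1)])
  also have "\<dots> \<le> (\<Sum>j\<in>J. 1)" using assms(2) by (intro sum_mono) auto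
  finally show ?thesis by simp
qed

lemma part_rest:
  assumes "part N0 Y P" "J \<subseteq> N0"
  shows "Y - (\<Union>j\<in>J. P j) = (\<Union>j\<in>N0 - J. P j)"
proof -
  have p: "\<forall>a\<in>N0. P a \<subseteq> Y" "\<forall>a\<in>N0. \<forall>b\<in>N0. a \<noteq> b \<longrightarrow> P a \<inter> P b = {}" "(\<Union>a\<in>N0. P a) = Y"
    using assms(1) unfolding part_def by auto
  show ?thesis
  proof
    show "Y - (\<Union>j\<in>J. P j) \<subseteq> (\<Union>j\<in>N0 - J. P j)"
    proof
      fix y assume y: "y \<in> Y - (\<Union>j\<in>J. P j)"
      then obtain j where "j \<in> N0" "y \<in> P j" using p(3) by blast
      then show "y \<in> (\<Union>j\<in>N0 - J. P j)" using y by blast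
    qed
  next
    show "(\<Union>j\<in>N0 - J. P j) \<subseteq> Y - (\<Union>j\<in>J. P j)"
    proof
      fix y assume "y \<in> (\<Union>j\<in>N0 - J. P j)"
      then obtain j where j: "j \<in> N0 - J" "y \<in> P j" by blast
      have "y \<in> Y" using j p(1) by blast
      moreover have "y \<notin> P j'" if "j' \<in> J" for j'
      proof -
        have "j' \<in> N0" "j' \<noteq> j" using that assms(2) j(1) by auto
        then show ?thesis using p(2) j by blast
      qed
      ultimately show "y \<in> Y - (\<Union>j\<in>J. P j)" by blast
    qed
  qed
qed

lemma finish:
  assumes "part {1..n} {1..m} A" "\<forall>a\<in>{1..n}. mms n m v a \<le> val v a (A a)"
  shows "\<exists>A. mms_alloc n m v A"
  using assms by (auto simp: mms_alloc_def is_alloc_part)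

theorem lemma20:
  fixes n m c nc :: nat and v :: "nat \<Rightarrow> nat \<Rightarrow> real"
  assumes "chores_inst n m v" and "ordered_inst n m v"
    and "c > 0" and "m = n + c"
    and "nc > 0"
    and "\<forall>n' v'. n' \<ge> nc \<longrightarrow> chores_inst n' (n' + (c - 1)) v'
                 \<longrightarrow> (\<exists>A. mms_alloc n' (n' + (c - 1)) v' A)"
    and "n > nc"
    and "i \<in> {1..n}" and "mms_partition n m v i P"
    and "card {j\<in>{1..n}. card (P j) < 2} \<ge> n - 2"
    and "card {j\<in>{1..n}. card (P j) < 3} \<ge> n - 1"
  shows "\<exists>A. mms_alloc n m v A"
proof -
  note ci = assms(1) and hyp = assms(6) and iN = assms(8)
  have n2: "2 \<le> n" using assms(5,7) by linarith
  have n1: "1 \<le> n" using n2 by linarith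
  define N where "N = {1..n}"
  have finN: "finite N" "card N = n" unfolding N_def by auto
  have P: "part N {1..m} P" "\<forall>j\<in>N. mms n m v i \<le> val v i (P j)"
    using assms(9) unfolding mms_partition_def is_alloc_part N_def by auto
  have Ps: "\<forall>j\<in>N. P j \<subseteq> {1..m}" "\<forall>j\<in>N. \<forall>l\<in>N. j \<noteq> l \<longrightarrow> P j \<inter> P l = {}"
    "(\<Union>j\<in>N. P j) = {1..m}" using P(1) unfolding part_def by auto
  define X1 where "X1 = {j\<in>N. card (P j) < 2}"
  define X2 where "X2 = {j\<in>N. card (P j) < 3}"
  have cX1: "n - 2 \<le> card X1" using assms(10) unfolding X1_def N_def by simp
  have cX2: "n - 1 \<le> card X2" using assms(11) unfolding X2_def N_def by simp
  have "\<exists>L\<in>N. L \<notin> X1 \<and> (\<forall>j\<in>N-{L}. card (P j) \<le> 2)"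
  proof (cases "\<exists>L\<in>N. \<not> card (P L) < 3")
    case True
    then obtain L where L: "L \<in> N" "\<not> card (P L) < 3" by blast
    have sub: "X2 \<subseteq> N - {L}" unfolding X2_def using L by auto
    have cNL: "card (N - {L}) = n - 1" using L(1) finN by simp
    have fNL: "finite (N - {L})" using finN by simp
    have "card (N - {L}) \<le> card X2" using cX2 cNL by linarith
    then have eq: "X2 = N - {L}" by (rule card_seteq[OF fNL sub])
    have c2: "\<forall>j\<in>N-{L}. card (P j) \<le> 2"
    proof
      fix j assume "j \<in> N - {L}"
      then have "j \<in> X2" using eq by simp
      then show "card (P j) \<le> 2" unfolding X2_def by simp
    qed
    have "L \<notin> X1" unfolding X1_def using L(2) by simp
    then show ?thesis using L(1) c2 by blast
  next
    case False
    have "\<exists>L\<in>N. L \<notin> X1"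
    proof (rule ccontr)
      assume "\<not> (\<exists>L\<in>N. L \<notin> X1)"
      then have "\<forall>j\<in>N. card (P j) \<le> 1" unfolding X1_def by auto
      then have "card (\<Union>j\<in>N. P j) \<le> card N" by (rule card_UN_small[OF finN(1)])
      moreover have "card (\<Union>j\<in>N. P j) = m" using Ps(3) by simp
      ultimately show False using finN assms(3,4) by linarith
    qed
    then obtain L where "L \<in> N" "L \<notin> X1" by blast
    moreover have "\<forall>j\<in>N-{L}. card (P j) \<le> 2" using False by auto
    ultimately show ?thesis by blast
  qed
  then obtain L where L: "L \<in> N" "L \<notin> X1" "\<forall>j\<in>N-{L}. card (P j) \<le> 2" by blast
  have X1L: "X1 \<subseteq> N - {L}" unfolding X1_def using L(2) X1_def by auto
  have cD: "card (N - {L} - X1) \<le> 1"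
  proof -
    have "card (N - {L} - X1) = card (N - {L}) - card X1"
      using X1L finN by (simp add: card_Diff_subset finite_subset)
    moreover have "card (N - {L}) = n - 1" using L finN by simp
    ultimately show ?thesis using cX1 by linarith
  qed
  have PL: "mms n m v i \<le> val v i (P L)" using P(2) L(1) by blast
  have PLs: "P L \<subseteq> {1..m}" using Ps(1) L(1) by blast
  have fNL: "finite (N - {L})" "card (N - {L}) = n - 1" using finN L(1) by auto
  have fNi: "finite (N - {i})" "card (N - {i}) = n - 1" "i \<in> N" using finN iN unfolding N_def by auto
  have neg: "\<And>a. a \<in> N \<Longrightarrow> \<forall>g\<in>{1..m}. v a g \<le> 0" using ci unfolding chores_inst_def N_def by blast
  show ?thesis
  proof (cases "\<forall>j\<in>N-{L}. card (P j) \<le> 1")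
    case True
    define T where "T = {1..m} - P L"
    have T: "T = (\<Union>j\<in>N-{L}. P j)" unfolding T_def using part_rest[OF P(1), of "{L}"] L(1) by simp
    have cT: "card T \<le> n - 1" unfolding T using card_UN_small[OF fNL(1) True] fNL(2) by simp
    have fT: "finite T" unfolding T_def by simp
    obtain F where F: "part (N - {i}) T F" "\<forall>a\<in>N-{i}. card (F a) \<le> 1 \<and> F a \<subseteq> T"
      using part_singles[OF fT fNi(1)] cT fNi(2) by auto
    have "part (insert i (N - {i})) (P L \<union> T) (F(i := P L))"
      by (rule part_insert[OF F(1)]) (auto simp: T_def)
    moreover have "insert i (N - {i}) = N" using fNi(3) by auto
    moreover have "P L \<union> T = {1..m}" using PLs unfolding T_def by auto
    ultimately have pa: "part {1..n} {1..m} (F(i := P L))" unfolding N_def by simp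
    show ?thesis
    proof (rule finish[OF pa], intro ballI)
      fix a assume a: "a \<in> {1..n}"
      show "mms n m v a \<le> val v a ((F(i := P L)) a)"
      proof (cases "a = i")
        case True then show ?thesis using PL by simp
      next
        case False
        then have "a \<in> N - {i}" using a unfolding N_def by simp
        then have "card (F a) \<le> 1" "F a \<subseteq> {1..m}" using F(2) unfolding T_def by auto
        then show ?thesis using small_ok[OF ci n1 a] False by simp
      qed
    qed
  next
    case False
    then obtain j0 where j0: "j0 \<in> N - {L}" "\<not> card (P j0) \<le> 1" by blast
    have "card (P j0) \<le> 2" using j0(1) L(3) by blast
    then have cB: "card (P j0) = 2" using j0(2) by linarith
    have j0X: "j0 \<notin> X1" using j0(2) unfolding X1_def by auto
    have others: "\<forall>j\<in>N-{L,j0}. card (P j) \<le> 1"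
    proof
      fix j assume j: "j \<in> N - {L, j0}"
      show "card (P j) \<le> 1"
      proof (rule ccontr)
        assume "\<not> card (P j) \<le> 1"
        then have "j \<notin> X1" unfolding X1_def by auto
        then have "j \<in> N - {L} - X1" "j0 \<in> N - {L} - X1" using j j0 j0X by auto
        moreover have "finite (N - {L} - X1)" using finN by simp
        ultimately show False using cD card_le_Suc0_iff_eq j by (metis One_nat_def insertCI DiffD2)
      qed
    qed
    define B where "B = P j0"
    have Bs: "B \<subseteq> {1..m}" using Ps(1) j0(1) unfolding B_def by blast
    have LB: "P L \<inter> B = {}" using Ps(2) L(1) j0(1) unfolding B_def by blast
    define T where "T = {1..m} - (P L \<union> B)"
    have T: "T = (\<Union>j\<in>N-{L,j0}. P j)" unfolding T_def B_def
      using part_rest[OF P(1), of "{L,j0}"] L(1) j0(1) by (simp add: Diff_insert2 [symmetric] insert_commute)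
    have fNLj: "finite (N - {L,j0})" "card (N - {L, j0}) = n - 2" using finN L(1) j0(1) by auto
    have cT: "card T \<le> n - 2" unfolding T using card_UN_small[OF fNLj(1) others] fNLj(2) by simp
    have fT: "finite T" unfolding T_def by simp
    show ?thesis
    proof (cases "\<exists>a\<in>N-{i}. mms n m v a \<le> val v a B")
      case True
      then obtain a where a: "a \<in> N - {i}" "mms n m v a \<le> val v a B" by blast
      have fNia: "finite (N - {i,a})" "card (N - {i,a}) = n - 2" using finN a fNi(3) by auto
      obtain F where F: "part (N - {i,a}) T F" "\<forall>b\<in>N-{i,a}. card (F b) \<le> 1 \<and> F b \<subseteq> T"
        using part_singles[OF fT fNia(1)] cT fNia(2) by auto
      have p1: "part (insert a (N - {i,a})) (B \<union> T) (F(a := B))"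
        by (rule part_insert[OF F(1)]) (auto simp: T_def)
      have p2: "part (insert i (insert a (N - {i,a}))) (P L \<union> (B \<union> T)) ((F(a := B))(i := P L))"
        by (rule part_insert[OF p1]) (use a LB in \<open>auto simp: T_def\<close>)
      moreover have "insert i (insert a (N - {i,a})) = N" using fNi(3) a by auto
      moreover have "P L \<union> (B \<union> T) = {1..m}" using PLs Bs unfolding T_def by auto
      ultimately have pa: "part {1..n} {1..m} ((F(a := B))(i := P L))" unfolding N_def by simp
      show ?thesis
      proof (rule finish[OF pa], intro ballI)
        fix b assume b: "b \<in> {1..n}"
        show "mms n m v b \<le> val v b (((F(a := B))(i := P L)) b)"
        proof (cases "b = i")
          case True then show ?thesis using PL by simp
        next
          case bi: False
          show ?thesis
          proof (cases "b = a")
            case True then show ?thesis using a bi by simp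
          next
            case False
            then have "b \<in> N - {i,a}" using b bi unfolding N_def by simp
            then have "card (F b) \<le> 1" "F b \<subseteq> {1..m}" using F(2) unfolding T_def by auto
            then show ?thesis using small_ok[OF ci n1 b] False bi by simp
          qed
        qed
      qed
    next
      case False
      then have rej: "\<forall>a\<in>N-{i}. val v a B < mms n m v a" by (meson not_le)
      obtain x y where xy: "B = {x,y}" "x \<noteq> y" using cB unfolding B_def by (auto simp: card_2_iff)
      have xyM: "x \<in> {1..m}" "y \<in> {1..m}" using Bs xy by auto
      define Y where "Y = {1..m} - B"
      define m' where "m' = (n - 1) + (c - 1)"
      have "card Y = card {1..m} - card B" unfolding Y_def
        using Bs by (intro card_Diff_subset) (auto intro: finite_subset)
      then have cY: "card Y = m'" unfolding m'_def using cB assms(3,4) n2 unfolding B_def by simp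
      obtain \<tau> where \<tau>: "bij_betw \<tau> {1..m'} Y" using ex_bij_betw_nat_finite_1[of Y] cY unfolding Y_def by auto
      obtain \<sigma> where \<sigma>: "bij_betw \<sigma> {1..n-1} (N - {i})" using ex_bij_betw_nat_finite_1[OF fNi(1)] fNi(2) by auto
      define v' where "v' p j = v (\<sigma> p) (\<tau> j)" for p j
      have \<tau>i: "\<tau> ` {1..m'} = Y" "inj_on \<tau> {1..m'}" using \<tau> by (auto simp: bij_betw_def)
      have \<sigma>i: "\<sigma> ` {1..n-1} = N - {i}" "inj_on \<sigma> {1..n-1}" using \<sigma> by (auto simp: bij_betw_def)
      have ci': "chores_inst (n-1) m' v'"
        unfolding chores_inst_def
      proof (intro ballI)
        fix p j assume p: "p \<in> {1..n-1}" and j: "j \<in> {1..m'}"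
        have "\<sigma> p \<in> N" using p \<sigma>i(1) by blast
        moreover have "\<tau> j \<in> {1..m}" using j \<tau>i(1) unfolding Y_def by blast
        ultimately show "v' p j \<le> 0" unfolding v'_def using neg by blast
      qed
      have "n - 1 \<ge> nc" using assms(7) by linarith
      then obtain A' where A': "mms_alloc (n-1) m' v' A'" using hyp ci' unfolding m'_def by blast
      have A'a: "is_alloc (n-1) m' A'" "\<forall>p\<in>{1..n-1}. mms (n-1) m' v' p \<le> val v' p (A' p)"
        using A' unfolding mms_alloc_def by auto
      define F where "F a = \<tau> ` A' (inv_into {1..n-1} \<sigma> a)" for a
      have pF: "part (N - {i}) Y F" unfolding F_def by (rule part_relabel[OF \<sigma> \<tau> A'a(1)])
      have "part (insert i (N - {i})) (B \<union> Y) (F(i := B))"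
        by (rule part_insert[OF pF]) (auto simp: Y_def)
      moreover have "insert i (N - {i}) = N" using fNi(3) by auto
      moreover have "B \<union> Y = {1..m}" using Bs unfolding Y_def by auto
      ultimately have pa: "part {1..n} {1..m} (F(i := B))" unfolding N_def by simp
      show ?thesis
      proof (rule finish[OF pa], intro ballI)
        fix a assume a: "a \<in> {1..n}"
        show "mms n m v a \<le> val v a ((F(i := B)) a)"
        proof (cases "a = i")
          case True then show ?thesis using P(2) j0(1) unfolding B_def by simp
        next
          case False
          then have aN: "a \<in> N - {i}" using a unfolding N_def by simp
          define p where "p = inv_into {1..n-1} \<sigma> a"
          have p: "p \<in> {1..n-1}" "\<sigma> p = a" unfolding p_def using aN \<sigma>i(1)
            by (metis inv_into_into f_inv_into_f)+
          have sub: "A' p \<subseteq> {1..m'}" using A'a(1) p(1) unfolding is_alloc_def by blast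
          have "val v a (F a) = sum (v a) (\<tau> ` A' p)" unfolding F_def val_def p_def by simp
          also have "\<dots> = sum (\<lambda>j. v a (\<tau> j)) (A' p)"
            using sum.reindex[of \<tau> "A' p" "v a"] inj_on_subset[OF \<tau>i(2) sub] by simp
          also have "\<dots> = val v' p (A' p)" unfolding val_def v'_def using p(2) by simp
          finally have e: "val v a (F a) = val v' p (A' p)" .
          have r: "v a x + v a y < mms n m v a" using rej aN xy by (simp add: val_def)
          have \<tau>': "bij_betw \<tau> {1..m'} ({1..m} - {x,y})" using \<tau> xy unfolding Y_def by simp
          have "mms n m v a \<le> mms (n-1) m' v' p"
            by (rule reject_valid[OF ci a n2 xyM xy(2) r \<tau>']) (simp add: v'_def p(2))
          also have "\<dots> \<le> val v' p (A' p)" using A'a(2) p(1) by blast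
          finally show ?thesis using e False by simp
        qed
      qed
    qed
  qed
qed

end
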